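(* Let $d\ge2$, $n\ge1$, $H_i(X)=\sum_{|\alpha|=d}\frac{H_{i,\alpha}}{\alpha!}X^\alpha$ ($i\in[n]$) with complex coefficients, and suppose $(JH)^p=0$ for some integer $1\le p\le n$. Then for every $n$-type tree $\mathcal{T}=(T,\tau)$ with $T\in\mathcal{C}_k^{(d)}$ and every path $(v_0,\dots,v_p)$ in $T$, $$\sum_{\mathcal{T}'\in\mathrm{Sh}(\mathcal{T};v_0,\dots,v_p)}\mathcal{E}_H(\mathcal{T}')=0.$$
   Context: A $d$-Catalan tree is a rooted planar tree in which each vertex has $0$ or $d$ children; $\mathcal{C}_k^{(d)}$ is the set of those with $k$ internal vertices. An $n$-type tree $(T,\tau)$ is such a tree with a type function $\tau$ from its vertices to $[n]$. A path $(v_0,\dots,v_p)$ satisfies: $v_i$ is a child of $v_{i-1}$. The labelled shuffle class $\mathrm{Sh}(\mathcal{T};v_0,\dots,v_p)$ is the set of (distinct) $n$-type trees obtained from $\mathcal{T}$ by (i) rearranging the labelled subtrees subtended by the $(d-1)p$ siblings of $v_1,\dots,v_p$ among those sibling positions, and (ii) giving arbitrary new types in $[n]$ to $v_1,\dots,v_{p-1}$. For an internal vertex $v$, $\mu(v)\in\mathbb{Z}^n_{\ge0}$ counts its children of each type, and $\mathcal{E}_H(\mathcal{T})=\prod_{v\text{ internal}}H_{\tau(v),\mu(v)}$. $JH$ is the Jacobian matrix of $H=(H_1,\dots,H_n)$. *)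

theory Defs
  imports Complex_Main "HOL-Library.Poly_Mapping" "HOL-Library.Multiset"
begin

text \<open>A polynomial is a finitely supported map from monomials (exponent vectors
  finitely supported exponent vectors, exponent of X_j at position j) to coefficients.
  The types/indices in [n] are represented by 0,...,n-1.\<close>

type_synonym cpoly = "(nat \<Rightarrow>\<^sub>0 nat) \<Rightarrow>\<^sub>0 complex"

definition multi_idx :: "nat \<Rightarrow> nat \<Rightarrow> (nat \<Rightarrow>\<^sub>0 nat) set" where
  "multi_idx n d = {\<alpha>. Poly_Mapping.keys \<alpha> \<subseteq> {..<n} \<and> (\<Sum>j<n. Poly_Mapping.lookup \<alpha> j) = d}"

definition mfact :: "nat \<Rightarrow> (nat \<Rightarrow>\<^sub>0 nat) \<Rightarrow> nat" where
  "mfact n \<alpha> = (\<Prod>j<n. fact (Poly_Mapping.lookup \<alpha> j))"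

definition Hpoly :: "nat \<Rightarrow> nat \<Rightarrow> (nat \<Rightarrow> (nat \<Rightarrow>\<^sub>0 nat) \<Rightarrow> complex) \<Rightarrow> nat \<Rightarrow> cpoly" where
  "Hpoly n d Hc i = (\<Sum>\<alpha>\<in>multi_idx n d. Poly_Mapping.single \<alpha> (Hc i \<alpha> / of_nat (mfact n \<alpha>)))"

definition pdiff :: "nat \<Rightarrow> cpoly \<Rightarrow> cpoly" where
  "pdiff j f = (\<Sum>\<alpha>\<in>Poly_Mapping.keys f.
      Poly_Mapping.single (\<alpha> - Poly_Mapping.single j 1) (Poly_Mapping.lookup f \<alpha> * of_nat (Poly_Mapping.lookup \<alpha> j)))"

definition jac :: "nat \<Rightarrow> nat \<Rightarrow> (nat \<Rightarrow> (nat \<Rightarrow>\<^sub>0 nat) \<Rightarrow> complex) \<Rightarrow> nat \<Rightarrow> nat \<Rightarrow> cpoly" where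
  "jac n d Hc i j = pdiff j (Hpoly n d Hc i)"

fun jac_pow :: "nat \<Rightarrow> nat \<Rightarrow> (nat \<Rightarrow> (nat \<Rightarrow>\<^sub>0 nat) \<Rightarrow> complex) \<Rightarrow> nat \<Rightarrow> nat \<Rightarrow> nat \<Rightarrow> cpoly" where
  "jac_pow n d Hc 0 i j = (if i = j then 1 else 0)"
| "jac_pow n d Hc (Suc m) i j = (\<Sum>l<n. jac_pow n d Hc m i l * jac n d Hc l j)"

definition jac_nilpotent_pow :: "nat \<Rightarrow> nat \<Rightarrow> (nat \<Rightarrow> (nat \<Rightarrow>\<^sub>0 nat) \<Rightarrow> complex) \<Rightarrow> nat \<Rightarrow> bool" where
  "jac_nilpotent_pow n d Hc p \<longleftrightarrow> (\<forall>i<n. \<forall>j<n. jac_pow n d Hc p i j = 0)"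

text \<open>A rooted planar tree whose vertices carry a type: Nd i ts is a vertex of
  type i with ordered list of children ts (leaf iff ts = []).\<close>
datatype ttree = Nd nat "ttree list"

fun root_type :: "ttree \<Rightarrow> nat" where
  "root_type (Nd i ts) = i"

fun d_catalan :: "nat \<Rightarrow> ttree \<Rightarrow> bool" where
  "d_catalan d (Nd i ts) \<longleftrightarrow> (ts = [] \<or> length ts = d) \<and> (\<forall>t\<in>set ts. d_catalan d t)"

fun n_type :: "nat \<Rightarrow> ttree \<Rightarrow> bool" where
  "n_type n (Nd i ts) \<longleftrightarrow> i < n \<and> (\<forall>t\<in>set ts. n_type n t)"

fun internal_count :: "ttree \<Rightarrow> nat" where
  "internal_count (Nd i ts) = (if ts = [] then 0 else 1 + sum_list (map internal_count ts))"

definition mu :: "ttree list \<Rightarrow> (nat \<Rightarrow>\<^sub>0 nat)" where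
  "mu ts = sum_list (map (\<lambda>t. Poly_Mapping.single (root_type t) (1::nat)) ts)"

fun EH :: "(nat \<Rightarrow> (nat \<Rightarrow>\<^sub>0 nat) \<Rightarrow> complex) \<Rightarrow> ttree \<Rightarrow> complex" where
  "EH Hc (Nd i ts) = (if ts = [] then 1 else Hc i (mu ts) * prod_list (map (EH Hc) ts))"

text \<open>A vertex is addressed by the list of child positions from the root.\<close>
fun valid_addr :: "ttree \<Rightarrow> nat list \<Rightarrow> bool" where
  "valid_addr t [] = True"
| "valid_addr (Nd i ts) (c # cs) \<longleftrightarrow> c < length ts \<and> valid_addr (ts ! c) cs"

fun subtree_at :: "ttree \<Rightarrow> nat list \<Rightarrow> ttree" where
  "subtree_at t [] = t"
| "subtree_at (Nd i ts) (c # cs) = subtree_at (ts ! c) cs"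

fun replace_at :: "ttree \<Rightarrow> nat list \<Rightarrow> ttree \<Rightarrow> ttree" where
  "replace_at t [] s = s"
| "replace_at (Nd i ts) (c # cs) s = Nd i (ts[c := replace_at (ts ! c) cs s])"

text \<open>For the path starting at (the root of) u and following child positions cs:
  the list of the subtrees subtended by the siblings of v_1,...,v_p, level by level,
  left to right.\<close>
fun path_sibs :: "ttree \<Rightarrow> nat list \<Rightarrow> ttree list" where
  "path_sibs t [] = []"
| "path_sibs (Nd i ts) (c # cs) = (take c ts @ drop (Suc c) ts) @ path_sibs (ts ! c) cs"

fun path_types :: "ttree \<Rightarrow> nat list \<Rightarrow> nat list" where
  "path_types t [] = []"
| "path_types (Nd i ts) (c # cs) = i # path_types (ts ! c) cs"

text \<open>Rebuild a path of d-ary vertices: vertex types tys (for v_0,...,v_{p-1}),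
  child positions cs, sibling subtrees ss (d-1 per level, in order), bottom subtree b
  (the subtree of v_p).\<close>
fun rebuild :: "nat \<Rightarrow> nat list \<Rightarrow> nat list \<Rightarrow> ttree list \<Rightarrow> ttree \<Rightarrow> ttree" where
  "rebuild d (i # tys) (c # cs) ss b =
     Nd i (take c ss @ [rebuild d tys cs (drop (d - 1) ss) b] @ take (d - 1 - c) (drop c ss))"
| "rebuild d _ _ ss b = b"

text \<open>The labelled shuffle class Sh(T; v_0,...,v_p), where v_0 has address a and
  v_i = v_{i-1} extended by the child position cs ! (i-1).  Its members: the
  sibling subtrees are permuted arbitrarily among the sibling positions, the types
  of v_1,...,v_{p-1} are replaced by arbitrary types in [n]; everything else
  (including the types of v_0 and v_p and the subtree of v_p) is kept.\<close>
definition shuffle_class :: "nat \<Rightarrow> nat \<Rightarrow> ttree \<Rightarrow> nat list \<Rightarrow> nat list \<Rightarrow> ttree set" where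
  "shuffle_class n d T a cs =
     {replace_at T a
        (rebuild d (hd (path_types (subtree_at T a) cs) # tys) cs ss (subtree_at T (a @ cs))) | tys ss.
        length tys = length cs - 1 \<and> set tys \<subseteq> {..<n} \<and>
        mset ss = mset (path_sibs (subtree_at T a) cs)}"

end

theory Submission
  imports Defs "HOL-Combinatorics.Permutations"
begin


definition msum :: "nat list \<Rightarrow> (nat \<Rightarrow>\<^sub>0 nat)" where
  "msum L = sum_list (map (\<lambda>j. Poly_Mapping.single j (1::nat)) L)"

lemma pdiff_lookup:
  "Poly_Mapping.lookup (pdiff j f) \<beta> =
     Poly_Mapping.lookup f (\<beta> + Poly_Mapping.single j 1) * of_nat (Poly_Mapping.lookup \<beta> j + 1)"
proof -
  let ?e = "Poly_Mapping.single j (1::nat)"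
  have t: "(Poly_Mapping.lookup f \<alpha> * of_nat (Poly_Mapping.lookup \<alpha> j) when \<alpha> - ?e = \<beta>)
      = (if \<alpha> = \<beta> + ?e then Poly_Mapping.lookup f \<alpha> * of_nat (Poly_Mapping.lookup \<beta> j + 1) else 0)" for \<alpha>
  proof (cases "Poly_Mapping.lookup \<alpha> j = 0")
    case True
    have "\<alpha> \<noteq> \<beta> + ?e" using True by (auto simp: lookup_add)
    then show ?thesis using True by (simp add: when_def)
  next
    case False
    have "(\<alpha> - ?e = \<beta>) \<longleftrightarrow> \<alpha> = \<beta> + ?e"
    proof
      assume "\<alpha> - ?e = \<beta>"
      then show "\<alpha> = \<beta> + ?e" using False
        by (auto intro!: poly_mapping_eqI simp: lookup_add lookup_minus lookup_single when_def)
    next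
      assume "\<alpha> = \<beta> + ?e"
      then show "\<alpha> - ?e = \<beta>"
        by (auto intro!: poly_mapping_eqI simp: lookup_add lookup_minus lookup_single when_def)
    qed
    then show ?thesis by (auto simp: when_def lookup_add)
  qed
  have "Poly_Mapping.lookup (pdiff j f) \<beta> = (\<Sum>\<alpha>\<in>Poly_Mapping.keys f.
      (Poly_Mapping.lookup f \<alpha> * of_nat (Poly_Mapping.lookup \<alpha> j) when \<alpha> - ?e = \<beta>))"
    by (simp add: pdiff_def lookup_sum lookup_single)
  also have "\<dots> = (\<Sum>\<alpha>\<in>Poly_Mapping.keys f. (if \<alpha> = \<beta> + ?e then Poly_Mapping.lookup f \<alpha> * of_nat (Poly_Mapping.lookup \<beta> j + 1) else 0))"
    using t by simp
  also have "\<dots> = Poly_Mapping.lookup f (\<beta> + ?e) * of_nat (Poly_Mapping.lookup \<beta> j + 1)"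
    by (simp add: sum.delta' in_keys_iff)
  finally show ?thesis .
qed

lemma pdiff_add: "pdiff j (f + g) = pdiff j f + pdiff j g"
  by (rule poly_mapping_eqI) (simp add: pdiff_lookup lookup_add distrib_right)

lemma pdiff_zero [simp]: "pdiff j 0 = 0"
  by (rule poly_mapping_eqI) (simp add: pdiff_lookup)

lemma pdiff_sum: "pdiff j (\<Sum>x\<in>S. f x) = (\<Sum>x\<in>S. pdiff j (f x))"
  by (induction S rule: infinite_finite_induct) (simp_all add: pdiff_add)

lemma pm_expand: "(f::cpoly) = (\<Sum>\<alpha>\<in>Poly_Mapping.keys f. Poly_Mapping.single \<alpha> (Poly_Mapping.lookup f \<alpha>))"
  by (rule poly_mapping_eqI) (simp add: lookup_sum lookup_single when_def sum.delta in_keys_iff)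

lemma pdiff_single:
  "pdiff j (Poly_Mapping.single \<alpha> (c::complex)) =
     Poly_Mapping.single (\<alpha> - Poly_Mapping.single j 1) (c * of_nat (Poly_Mapping.lookup \<alpha> j))"
proof (rule poly_mapping_eqI)
  fix \<beta>
  let ?e = "Poly_Mapping.single j (1::nat)"
  show "Poly_Mapping.lookup (pdiff j (Poly_Mapping.single \<alpha> c)) \<beta> =
    Poly_Mapping.lookup (Poly_Mapping.single (\<alpha> - ?e) (c * of_nat (Poly_Mapping.lookup \<alpha> j))) \<beta>"
  proof (cases "Poly_Mapping.lookup \<alpha> j = 0")
    case True
    have "\<alpha> \<noteq> \<beta> + ?e" using True by (auto simp: lookup_add)
    then show ?thesis using True by (simp add: pdiff_lookup lookup_single when_def)
  next
    case False
    have "(\<alpha> - ?e = \<beta>) \<longleftrightarrow> \<alpha> = \<beta> + ?e"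
    proof
      assume "\<alpha> - ?e = \<beta>"
      then show "\<alpha> = \<beta> + ?e" using False
        by (auto intro!: poly_mapping_eqI simp: lookup_add lookup_minus lookup_single when_def)
    next
      assume "\<alpha> = \<beta> + ?e"
      then show "\<alpha> - ?e = \<beta>"
        by (auto intro!: poly_mapping_eqI simp: lookup_add lookup_minus lookup_single when_def)
    qed
    then show ?thesis by (auto simp: pdiff_lookup lookup_single when_def lookup_add)
  qed
qed

lemma leibniz_single:
  "pdiff j (Poly_Mapping.single \<alpha> (a::complex) * Poly_Mapping.single \<gamma> b) =
     pdiff j (Poly_Mapping.single \<alpha> a) * Poly_Mapping.single \<gamma> b
     + Poly_Mapping.single \<alpha> a * pdiff j (Poly_Mapping.single \<gamma> b)"
proof -
  let ?e = "Poly_Mapping.single j (1::nat)"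
  have s1: "(\<alpha> - ?e + \<gamma>) = \<alpha> + \<gamma> - ?e" if "Poly_Mapping.lookup \<alpha> j \<noteq> 0"
    using that by (auto intro!: poly_mapping_eqI simp: lookup_add lookup_minus lookup_single when_def)
  have s2: "(\<alpha> + (\<gamma> - ?e)) = \<alpha> + \<gamma> - ?e" if "Poly_Mapping.lookup \<gamma> j \<noteq> 0"
    using that by (auto intro!: poly_mapping_eqI simp: lookup_add lookup_minus lookup_single when_def)
  have A: "Poly_Mapping.single (\<alpha> - ?e + \<gamma>) (a * of_nat (Poly_Mapping.lookup \<alpha> j) * b)
      = Poly_Mapping.single (\<alpha> + \<gamma> - ?e) (a * b * of_nat (Poly_Mapping.lookup \<alpha> j))"
  proof (cases "Poly_Mapping.lookup \<alpha> j = 0")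
    case False
    show ?thesis by (simp only: s1[OF False]) (simp add: mult_ac)
  qed simp
  have B: "Poly_Mapping.single (\<alpha> + (\<gamma> - ?e)) (a * (b * of_nat (Poly_Mapping.lookup \<gamma> j)))
      = Poly_Mapping.single (\<alpha> + \<gamma> - ?e) (a * b * of_nat (Poly_Mapping.lookup \<gamma> j))"
  proof (cases "Poly_Mapping.lookup \<gamma> j = 0")
    case False
    show ?thesis by (simp only: s2[OF False]) (simp add: mult_ac)
  qed simp
  have L: "pdiff j (Poly_Mapping.single \<alpha> a * Poly_Mapping.single \<gamma> b) =
     Poly_Mapping.single (\<alpha> + \<gamma> - ?e) (a * b * of_nat (Poly_Mapping.lookup \<alpha> j))
   + Poly_Mapping.single (\<alpha> + \<gamma> - ?e) (a * b * of_nat (Poly_Mapping.lookup \<gamma> j))"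
    by (simp only: mult_single pdiff_single lookup_add of_nat_add distrib_left single_add)
  have R: "pdiff j (Poly_Mapping.single \<alpha> a) * Poly_Mapping.single \<gamma> b
     + Poly_Mapping.single \<alpha> a * pdiff j (Poly_Mapping.single \<gamma> b) =
     Poly_Mapping.single (\<alpha> - ?e + \<gamma>) (a * of_nat (Poly_Mapping.lookup \<alpha> j) * b)
   + Poly_Mapping.single (\<alpha> + (\<gamma> - ?e)) (a * (b * of_nat (Poly_Mapping.lookup \<gamma> j)))"
    by (simp only: mult_single pdiff_single)
  show ?thesis unfolding L R A B ..
qed

lemma leibniz: "pdiff j (f * g) = pdiff j f * g + f * pdiff j (g::cpoly)"
proof -
  have "pdiff j (f * g) = pdiff j ((\<Sum>\<alpha>\<in>Poly_Mapping.keys f. Poly_Mapping.single \<alpha> (Poly_Mapping.lookup f \<alpha>))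
       * (\<Sum>\<gamma>\<in>Poly_Mapping.keys g. Poly_Mapping.single \<gamma> (Poly_Mapping.lookup g \<gamma>)))"
    by (simp flip: pm_expand)
  also have "\<dots> = (\<Sum>\<alpha>\<in>Poly_Mapping.keys f. \<Sum>\<gamma>\<in>Poly_Mapping.keys g.
      pdiff j (Poly_Mapping.single \<alpha> (Poly_Mapping.lookup f \<alpha>) * Poly_Mapping.single \<gamma> (Poly_Mapping.lookup g \<gamma>)))"
    by (simp add: sum_distrib_left sum_distrib_right pdiff_sum) (rule sum.swap)
  also have "\<dots> = (\<Sum>\<alpha>\<in>Poly_Mapping.keys f. \<Sum>\<gamma>\<in>Poly_Mapping.keys g.
      pdiff j (Poly_Mapping.single \<alpha> (Poly_Mapping.lookup f \<alpha>)) * Poly_Mapping.single \<gamma> (Poly_Mapping.lookup g \<gamma>)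
    + Poly_Mapping.single \<alpha> (Poly_Mapping.lookup f \<alpha>) * pdiff j (Poly_Mapping.single \<gamma> (Poly_Mapping.lookup g \<gamma>)))"
    by (simp add: leibniz_single)
  also have "\<dots> = pdiff j (\<Sum>\<alpha>\<in>Poly_Mapping.keys f. Poly_Mapping.single \<alpha> (Poly_Mapping.lookup f \<alpha>))
       * (\<Sum>\<gamma>\<in>Poly_Mapping.keys g. Poly_Mapping.single \<gamma> (Poly_Mapping.lookup g \<gamma>))
     + (\<Sum>\<alpha>\<in>Poly_Mapping.keys f. Poly_Mapping.single \<alpha> (Poly_Mapping.lookup f \<alpha>))
       * pdiff j (\<Sum>\<gamma>\<in>Poly_Mapping.keys g. Poly_Mapping.single \<gamma> (Poly_Mapping.lookup g \<gamma>))"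
    by (simp add: sum_distrib_left sum_distrib_right pdiff_sum sum.distrib) (rule arg_cong2[where f="(+)"]; rule sum.swap)
  also have "\<dots> = pdiff j f * g + f * pdiff j g"
    by (simp flip: pm_expand)
  finally show ?thesis .
qed

lemma pm_add_eq_0: "(\<alpha>::nat \<Rightarrow>\<^sub>0 nat) + \<gamma> = 0 \<longleftrightarrow> \<alpha> = 0 \<and> \<gamma> = 0"
proof
  assume h: "\<alpha> + \<gamma> = 0"
  have "Poly_Mapping.lookup \<alpha> k = 0 \<and> Poly_Mapping.lookup \<gamma> k = 0" for k
    using arg_cong[OF h, of "\<lambda>x. Poly_Mapping.lookup x k"] by (simp add: lookup_add)
  then show "\<alpha> = 0 \<and> \<gamma> = 0" by (auto intro!: poly_mapping_eqI)
qed simp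

lemma lookup_mult_zero: "Poly_Mapping.lookup ((f::cpoly) * g) 0 = Poly_Mapping.lookup f 0 * Poly_Mapping.lookup g 0"
proof -
  have "Poly_Mapping.lookup (f * g) 0 = Poly_Mapping.lookup ((\<Sum>\<alpha>\<in>Poly_Mapping.keys f. Poly_Mapping.single \<alpha> (Poly_Mapping.lookup f \<alpha>))
       * (\<Sum>\<gamma>\<in>Poly_Mapping.keys g. Poly_Mapping.single \<gamma> (Poly_Mapping.lookup g \<gamma>))) 0"
    by (simp flip: pm_expand)
  also have "\<dots> = (\<Sum>\<alpha>\<in>Poly_Mapping.keys f. \<Sum>\<gamma>\<in>Poly_Mapping.keys g.
     ((Poly_Mapping.lookup f \<alpha> * Poly_Mapping.lookup g \<gamma>) when \<alpha> + \<gamma> = 0))"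
    by (simp add: sum_distrib_left sum_distrib_right lookup_sum mult_single lookup_single) (rule sum.swap)
  also have "\<dots> = (\<Sum>\<alpha>\<in>Poly_Mapping.keys f. \<Sum>\<gamma>\<in>Poly_Mapping.keys g.
     (if \<alpha> = 0 then Poly_Mapping.lookup f \<alpha> else 0) * (if \<gamma> = 0 then Poly_Mapping.lookup g \<gamma> else 0))"
    by (intro sum.cong refl) (simp add: when_def pm_add_eq_0)
  also have "\<dots> = Poly_Mapping.lookup f 0 * Poly_Mapping.lookup g 0"
    by (simp add: sum_distrib_left[symmetric] sum_distrib_right[symmetric] sum.delta in_keys_iff)
  finally show ?thesis .
qed


fun pds :: "nat list \<Rightarrow> cpoly \<Rightarrow> cpoly" where
  "pds [] f = f"
| "pds (j # L) f = pdiff j (pds L f)"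

fun ff :: "(nat \<Rightarrow>\<^sub>0 nat) \<Rightarrow> nat list \<Rightarrow> nat" where
  "ff \<beta> [] = 1"
| "ff \<beta> (j # L) = ff (\<beta> + Poly_Mapping.single j 1) L * (Poly_Mapping.lookup \<beta> j + 1)"

lemma msum_Nil [simp]: "msum [] = 0" by (simp add: msum_def)
lemma msum_Cons [simp]: "msum (j # L) = Poly_Mapping.single j 1 + msum L" by (simp add: msum_def)
lemma msum_append [simp]: "msum (A @ B) = msum A + msum B" by (simp add: msum_def)

lemma lookup_pds: "Poly_Mapping.lookup (pds L f) \<beta> = Poly_Mapping.lookup f (\<beta> + msum L) * of_nat (ff \<beta> L)"
  by (induction L arbitrary: \<beta>) (simp_all add: pdiff_lookup add_ac algebra_simps)

lemma pds_append: "pds (A @ B) f = pds A (pds B f)"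
  by (induction A) simp_all

lemma pds_zero [simp]: "pds L 0 = 0"
  by (induction L) simp_all

lemma pds_sum: "pds L (\<Sum>x\<in>S. f x) = (\<Sum>x\<in>S. pds L (f x))"
  by (induction L) (simp_all add: pdiff_sum)

lemma fact_step:
  fixes \<beta> :: "nat \<Rightarrow>\<^sub>0 nat"
  assumes "j < n"
  shows "(Poly_Mapping.lookup \<beta> j + 1) * (\<Prod>k<n. fact (Poly_Mapping.lookup \<beta> k))
       = (\<Prod>k<n. fact (Poly_Mapping.lookup (\<beta> + Poly_Mapping.single j 1) k) :: nat)"
proof -
  have "(\<Prod>k<n. fact (Poly_Mapping.lookup (\<beta> + Poly_Mapping.single j 1) k) :: nat)
      = (\<Prod>k<n. (if k = j then Poly_Mapping.lookup \<beta> j + 1 else 1) * fact (Poly_Mapping.lookup \<beta> k))"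
    by (intro prod.cong refl) (auto simp: lookup_add lookup_single when_def)
  also have "\<dots> = (Poly_Mapping.lookup \<beta> j + 1) * (\<Prod>k<n. fact (Poly_Mapping.lookup \<beta> k))"
  proof -
    have "(\<Prod>k<n. (if k = j then Poly_Mapping.lookup \<beta> j + 1 else 1)) = Poly_Mapping.lookup \<beta> j + 1"
      proof -
      have "(\<Prod>k<n. (if (k::nat) = j then c else 1)) = c" for c :: nat using assms by (subst prod.delta) auto
      then show ?thesis .
    qed
    then show ?thesis by (simp only: prod.distrib)
  qed
  finally show ?thesis by simp
qed

lemma ff_fact:
  "set L \<subseteq> {..<n} \<Longrightarrow> ff \<beta> L * (\<Prod>k<n. fact (Poly_Mapping.lookup \<beta> k))
     = (\<Prod>k<n. fact (Poly_Mapping.lookup (\<beta> + msum L) k))"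
proof (induction L arbitrary: \<beta>)
  case Nil then show ?case by simp
next
  case (Cons j L)
  have "ff \<beta> (j # L) * (\<Prod>k<n. fact (Poly_Mapping.lookup \<beta> k))
      = ff (\<beta> + Poly_Mapping.single j 1) L * ((Poly_Mapping.lookup \<beta> j + 1) * (\<Prod>k<n. fact (Poly_Mapping.lookup \<beta> k)))"
    by (simp only: ff.simps mult.assoc)
  also have "\<dots> = ff (\<beta> + Poly_Mapping.single j 1) L * (\<Prod>k<n. fact (Poly_Mapping.lookup (\<beta> + Poly_Mapping.single j 1) k))"
    using Cons.prems by (simp only: fact_step[of j n \<beta>, symmetric] list.set insert_subset lessThan_iff)
  also have "\<dots> = (\<Prod>k<n. fact (Poly_Mapping.lookup (\<beta> + msum (j # L)) k))"
    using Cons by (simp add: add_ac)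
  finally show ?case .
qed

lemma ff_zero: "set L \<subseteq> {..<n} \<Longrightarrow> ff 0 L = mfact n (msum L)"
  using ff_fact[of L n 0] by (simp add: mfact_def)

lemma finite_multi_idx: "finite (multi_idx n d)"
proof -
  have sub: "Poly_Mapping.lookup ` multi_idx n d \<subseteq>
      {f. \<forall>x. (x \<in> {..<n} \<longrightarrow> f x \<in> {..d}) \<and> (x \<notin> {..<n} \<longrightarrow> f x = 0)}"
  proof clarify
    fix \<alpha> x assume a: "\<alpha> \<in> multi_idx n d"
    then have k: "Poly_Mapping.keys \<alpha> \<subseteq> {..<n}" and s: "(\<Sum>j<n. Poly_Mapping.lookup \<alpha> j) = d"
      by (auto simp: multi_idx_def)
    show "(x \<in> {..<n} \<longrightarrow> Poly_Mapping.lookup \<alpha> x \<in> {..d}) \<and> (x \<notin> {..<n} \<longrightarrow> Poly_Mapping.lookup \<alpha> x = 0)"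
    proof (intro conjI impI)
      assume "x \<in> {..<n}"
      then have "Poly_Mapping.lookup \<alpha> x \<le> (\<Sum>j<n. Poly_Mapping.lookup \<alpha> j)"
        by (intro member_le_sum) auto
      then show "Poly_Mapping.lookup \<alpha> x \<in> {..d}" using s by simp
    next
      assume "x \<notin> {..<n}"
      then show "Poly_Mapping.lookup \<alpha> x = 0" using k by (auto simp: in_keys_iff)
    qed
  qed
  have "finite (Poly_Mapping.lookup ` multi_idx n d)"
    by (rule finite_subset[OF sub]) (rule finite_set_of_finite_funs; simp)
  then show ?thesis
    by (rule finite_imageD) (auto intro: inj_onI simp: poly_mapping.lookup_inject)
qed

lemma lookup_Hpoly:
  "Poly_Mapping.lookup (Hpoly n d Hc i) \<alpha> =
     (if \<alpha> \<in> multi_idx n d then Hc i \<alpha> / of_nat (mfact n \<alpha>) else 0)"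
  by (simp add: Hpoly_def lookup_sum lookup_single when_def finite_multi_idx sum.delta)

lemma mfact_nz: "mfact n \<alpha> \<noteq> 0"
  by (simp add: mfact_def)

lemma sum_lookup_msum: "set L \<subseteq> {..<n} \<Longrightarrow> (\<Sum>k<n. Poly_Mapping.lookup (msum L) k) = length L"
  by (induction L) (auto simp: lookup_add lookup_single when_def sum.distrib)

lemma keys_msum: "Poly_Mapping.keys (msum L) \<subseteq> set L"
proof (induction L)
  case (Cons j L)
  then show ?case using keys_add[of "Poly_Mapping.single j (1::nat)" "msum L"] by auto
qed simp

lemma jac_term:
  assumes "set A \<subseteq> {..<n}" "j < n"
  shows "Poly_Mapping.lookup (pds A (jac n d Hc i j)) 0 =
    (if Suc (length A) = d then Hc i (Poly_Mapping.single j 1 + msum A) else 0)"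
proof -
  have e: "pds A (jac n d Hc i j) = pds (A @ [j]) (Hpoly n d Hc i)"
    by (simp add: pds_append jac_def)
  have s: "set (A @ [j]) \<subseteq> {..<n}" using assms by auto
  have m: "msum (A @ [j]) = Poly_Mapping.single j 1 + msum A" by (simp add: add_ac)
  have mi: "msum (A @ [j]) \<in> multi_idx n d \<longleftrightarrow> Suc (length A) = d"
    using sum_lookup_msum[OF s] keys_msum[of "A @ [j]"] s by (auto simp: multi_idx_def)
  show ?thesis
    unfolding e lookup_pds ff_zero[OF s] lookup_Hpoly using mi mfact_nz
    by (simp add: m add.commute)
qed


definition sub :: "nat list \<Rightarrow> nat list \<Rightarrow> nat \<Rightarrow> nat list" where
  "sub L w m = map fst (filter (\<lambda>(x, c). c = m) (zip L w))"

definition Wl :: "nat \<Rightarrow> nat \<Rightarrow> nat list set" where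
  "Wl N p = {w. set w \<subseteq> {..<p} \<and> length w = N}"

lemma finite_Wl [simp]: "finite (Wl N p)"
  unfolding Wl_def by (rule finite_lists_length_eq) simp

lemma Wl_0 [simp]: "Wl 0 p = {[]}"
  by (auto simp: Wl_def)

lemma Wl_Suc: "Wl (Suc N) p = (\<lambda>(c, w). c # w) ` ({..<p} \<times> Wl N p)"
proof (rule set_eqI)
  fix x show "x \<in> Wl (Suc N) p \<longleftrightarrow> x \<in> (\<lambda>(c, w). c # w) ` ({..<p} \<times> Wl N p)"
    by (cases x) (auto simp: Wl_def)
qed

lemma Wl_Suc_snoc: "Wl (Suc N) p = (\<lambda>(w, c). w @ [c]) ` (Wl N p \<times> {..<p})"
proof (rule set_eqI)
  fix x show "x \<in> Wl (Suc N) p \<longleftrightarrow> x \<in> (\<lambda>(w, c). w @ [c]) ` (Wl N p \<times> {..<p})"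
  proof
    assume x: "x \<in> Wl (Suc N) p"
    then have "x \<noteq> []" by (auto simp: Wl_def)
    then have "x = butlast x @ [last x]" by simp
    moreover have "butlast x \<in> Wl N p" using x \<open>x \<noteq> []\<close>
      by (auto simp: Wl_def dest: in_set_butlastD)
    moreover have "last x \<in> set x" using \<open>x \<noteq> []\<close> by (rule last_in_set)
    then have "last x \<in> {..<p}" using x by (auto simp: Wl_def)
    ultimately show "x \<in> (\<lambda>(w, c). w @ [c]) ` (Wl N p \<times> {..<p})"
      by (intro image_eqI[of _ _ "(butlast x, last x)"]) auto
  qed (auto simp: Wl_def)
qed

lemma sub_Nil [simp]: "sub [] [] m = []"
  by (simp add: sub_def)

lemma sub_Cons [simp]: "sub (j # L) (c # w) m = (if c = m then j # sub L w m else sub L w m)"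
  by (simp add: sub_def)

lemma set_sub: "set (sub L w m) \<subseteq> set L"
  by (auto simp: sub_def dest: set_zip_leftD)

lemma single_one_nz [simp]: "Poly_Mapping.single j (1::nat) \<noteq> 0"
  by (metis lookup_single_eq lookup_zero one_neq_zero)

lemma single_Suc0_nz [simp]: "Poly_Mapping.single j (Suc 0) \<noteq> 0"
  using single_one_nz by simp

lemma pdiff_prod:
  assumes "finite S"
  shows "pdiff j (\<Prod>m\<in>S. g m) = (\<Sum>c\<in>S. \<Prod>m\<in>S. (if m = c then pdiff j (g m) else g m))"
  using assms
proof (induction S rule: finite_induct)
  case empty
  have "pdiff j 1 = 0"
    by (rule poly_mapping_eqI) (simp add: pdiff_lookup lookup_one when_def pm_add_eq_0)
  then show ?case by simp
next
  case (insert x F)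
  have "pdiff j (\<Prod>m\<in>insert x F. g m) = pdiff j (g x) * (\<Prod>m\<in>F. g m) + g x * pdiff j (\<Prod>m\<in>F. g m)"
    using insert by (simp add: leibniz)
  also have "\<dots> = pdiff j (g x) * (\<Prod>m\<in>F. g m)
     + (\<Sum>c\<in>F. g x * (\<Prod>m\<in>F. (if m = c then pdiff j (g m) else g m)))"
    using insert by (simp add: sum_distrib_left)
  also have "\<dots> = (\<Sum>c\<in>insert x F. \<Prod>m\<in>insert x F. (if m = c then pdiff j (g m) else g m))"
  proof -
    have a: "(\<Prod>m\<in>F. (if m = x then pdiff j (g m) else g m)) = (\<Prod>m\<in>F. g m)"
      using insert(2) by (auto intro!: prod.cong)
    have b: "(\<Sum>c\<in>F. (if x = c then pdiff j (g x) else g x) * (\<Prod>m\<in>F. (if m = c then pdiff j (g m) else g m)))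
       = (\<Sum>c\<in>F. g x * (\<Prod>m\<in>F. (if m = c then pdiff j (g m) else g m)))"
      using insert(2) by (intro sum.cong) auto
    show ?thesis using insert(1,2) by (simp add: a b)
  qed
  finally show ?case .
qed

lemma pds_prod:
  "pds L (\<Prod>m<p. f m) = (\<Sum>w\<in>Wl (length L) p. \<Prod>m<p. pds (sub L w m) (f m))"
proof (induction L)
  case Nil then show ?case by simp
next
  case (Cons j L)
  have "pds (j # L) (\<Prod>m<p. f m) = (\<Sum>w\<in>Wl (length L) p. pdiff j (\<Prod>m<p. pds (sub L w m) (f m)))"
    using Cons by (simp add: pdiff_sum)
  also have "\<dots> = (\<Sum>w\<in>Wl (length L) p. \<Sum>c<p. \<Prod>m<p. pds (sub (j # L) (c # w) m) (f m))"
    by (auto simp: pdiff_prod intro!: sum.cong prod.cong)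
  also have "\<dots> = (\<Sum>c<p. \<Sum>w\<in>Wl (length L) p. \<Prod>m<p. pds (sub (j # L) (c # w) m) (f m))"
    by (rule sum.swap)
  also have "\<dots> = (\<Sum>(c, w)\<in>{..<p} \<times> Wl (length L) p. \<Prod>m<p. pds (sub (j # L) (c # w) m) (f m))"
    by (simp add: sum.cartesian_product)
  also have "\<dots> = (\<Sum>w\<in>Wl (length (j # L)) p. \<Prod>m<p. pds (sub (j # L) w m) (f m))"
    unfolding length_Cons Wl_Suc
    by (subst sum.reindex) (auto intro!: inj_onI sum.cong)
  finally show ?case .
qed

lemma lookup_prod_zero:
  "Poly_Mapping.lookup (\<Prod>m\<in>S. (f m :: cpoly)) 0 = (\<Prod>m\<in>S. Poly_Mapping.lookup (f m) 0)"
  by (induction S rule: infinite_finite_induct) (simp_all add: lookup_mult_zero)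

definition js :: "nat \<Rightarrow> nat list \<Rightarrow> nat \<Rightarrow> nat \<Rightarrow> nat" where
  "js i tys j m = (i # tys @ [j]) ! m"

lemma js_lt:
  assumes "i < n" "j < n" "set tys \<subseteq> {..<n}" "m \<le> Suc (length tys)"
  shows "js i tys j m < n"
proof -
  have "m < length (i # tys @ [j])" using assms by simp
  then have "(i # tys @ [j]) ! m \<in> set (i # tys @ [j])" by (rule nth_mem)
  then show ?thesis using assms by (auto simp: js_def)
qed

lemma jac_pow_expand:
  assumes "i < n"
  shows "jac_pow n d Hc (Suc q) i j =
    (\<Sum>tys\<in>Wl q n. \<Prod>m<Suc q. jac n d Hc (js i tys j m) (js i tys j (Suc m)))"
proof (induction q arbitrary: j)
  case 0
  have "jac_pow n d Hc (Suc 0) i j = (\<Sum>l<n. (if i = l then 1 else 0) * jac n d Hc l j)"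
    by simp
  also have "\<dots> = (\<Sum>l<n. (if i = l then jac n d Hc l j else 0))"
    by (intro sum.cong) auto
  also have "\<dots> = jac n d Hc i j"
    using assms by (simp add: sum.delta)
  finally show ?case by (simp add: js_def)
next
  case (Suc q)
  let ?J = "jac n d Hc"
  have "jac_pow n d Hc (Suc (Suc q)) i j = (\<Sum>l<n. jac_pow n d Hc (Suc q) i l * ?J l j)"
    by simp
  also have "\<dots> = (\<Sum>l<n. \<Sum>tys\<in>Wl q n. (\<Prod>m<Suc q. ?J (js i tys l m) (js i tys l (Suc m))) * ?J l j)"
    by (simp only: Suc.IH sum_distrib_right)
  also have "\<dots> = (\<Sum>(tys, l)\<in>Wl q n \<times> {..<n}. (\<Prod>m<Suc q. ?J (js i tys l m) (js i tys l (Suc m))) * ?J l j)"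
    by (subst sum.swap) (simp add: sum.cartesian_product)
  also have "\<dots> = (\<Sum>(tys, l)\<in>Wl q n \<times> {..<n}. \<Prod>m<Suc (Suc q). ?J (js i (tys @ [l]) j m) (js i (tys @ [l]) j (Suc m)))"
  proof (intro sum.cong refl, clarify)
    fix tys l assume tl: "tys \<in> Wl q n"
    then have len: "length tys = q" by (simp add: Wl_def)
    have e1: "js i (tys @ [l]) j m = js i tys l m" if "m \<le> Suc q" for m
      using that len unfolding js_def
      by (metis append_Cons append_assoc length_Cons length_append_singleton le_imp_less_Suc nth_append)
    have e2: "js i (tys @ [l]) j (Suc q) = l" "js i (tys @ [l]) j (Suc (Suc q)) = j"
      using len by (simp_all add: js_def nth_append)
    show "(\<Prod>m<Suc q. ?J (js i tys l m) (js i tys l (Suc m))) * ?J l j =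
        (\<Prod>m<Suc (Suc q). ?J (js i (tys @ [l]) j m) (js i (tys @ [l]) j (Suc m)))"
      by (simp only: prod.lessThan_Suc[of _ "Suc q"] e2) (simp add: e1)
  qed
  also have "\<dots> = (\<Sum>tys\<in>Wl (Suc q) n. \<Prod>m<Suc (Suc q). ?J (js i tys j m) (js i tys j (Suc m)))"
    unfolding Wl_Suc_snoc
    by (subst sum.reindex) (auto intro!: inj_onI sum.cong simp: case_prod_unfold)
  finally show ?case .
qed


lemma div_eq_iff_nat: "0 < (e::nat) \<Longrightarrow> (x div e = m) \<longleftrightarrow> (e*m \<le> x \<and> x < e*m + e)"
  by (metis add.commute div_nat_eqI dividend_less_times_div mult_Suc_right times_div_less_eq_dividend)

lemma sum_const_fibers:
  fixes g :: "'b \<Rightarrow> complex"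
  assumes "finite A" "\<And>y. y \<in> f ` A \<Longrightarrow> card {x\<in>A. f x = y} = K"
  shows "(\<Sum>x\<in>A. g (f x)) = of_nat K * (\<Sum>y\<in>f ` A. g y)"
proof -
  have "(\<Sum>x\<in>A. g (f x)) = (\<Sum>y\<in>f ` A. \<Sum>x\<in>{x\<in>A. f x = y}. g (f x))"
    by (rule sum.image_gen[OF assms(1)])
  also have "\<dots> = (\<Sum>y\<in>f ` A. of_nat K * g y)"
  proof (intro sum.cong refl)
    fix y assume y: "y \<in> f ` A"
    have "(\<Sum>x\<in>{x\<in>A. f x = y}. g (f x)) = (\<Sum>x\<in>{x\<in>A. f x = y}. g y)" by simp
    also have "\<dots> = of_nat K * g y" using assms(2)[OF y] by simp
    finally show "(\<Sum>x\<in>{x\<in>A. f x = y}. g (f x)) = of_nat K * g y" .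
  qed
  also have "\<dots> = of_nat K * (\<Sum>y\<in>f ` A. g y)" by (simp add: sum_distrib_left)
  finally show ?thesis .
qed

lemma comp_right_inj:
  assumes "\<pi>0 permutes S"
  shows "inj_on (\<lambda>\<sigma>. \<sigma> \<circ> \<pi>0) X"
proof (rule inj_onI)
  fix \<sigma> \<sigma>' assume h: "\<sigma> \<circ> \<pi>0 = \<sigma>' \<circ> \<pi>0"
  show "\<sigma> = \<sigma>'"
  proof
    fix x
    have "\<sigma> x = (\<sigma> \<circ> \<pi>0) (inv \<pi>0 x)" using permutes_inverses(1)[OF assms] by simp
    also have "\<dots> = (\<sigma>' \<circ> \<pi>0) (inv \<pi>0 x)" by (simp add: h)
    also have "\<dots> = \<sigma>' x" using permutes_inverses(1)[OF assms] by simp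
    finally show "\<sigma> x = \<sigma>' x" .
  qed
qed

lemma stage1:
  fixes L0 :: "'a list" and F :: "'a list \<Rightarrow> complex"
  shows "(\<Sum>\<pi>\<in>{\<pi>. \<pi> permutes {..<length L0}}. F (permute_list \<pi> L0)) =
     of_nat (card {\<pi>\<in>{\<pi>. \<pi> permutes {..<length L0}}. permute_list \<pi> L0 = L0}) * (\<Sum>ss\<in>{ss. mset ss = mset L0}. F ss)"
proof -
  let ?P = "{\<pi>. \<pi> permutes {..<length L0}}"
  let ?f = "\<lambda>\<pi>. permute_list \<pi> L0"
  have img: "?f ` ?P = {ss. mset ss = mset L0}"
  proof
    show "?f ` ?P \<subseteq> {ss. mset ss = mset L0}" by auto
    show "{ss. mset ss = mset L0} \<subseteq> ?f ` ?P"
    proof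
      fix ss assume "ss \<in> {ss. mset ss = mset L0}"
      then obtain p where "p permutes {..<length L0}" "permute_list p L0 = ss"
        by (auto elim: mset_eq_permutation)
      then show "ss \<in> ?f ` ?P" by auto
    qed
  qed
  have fib: "card {\<pi>\<in>?P. ?f \<pi> = y} = card {\<pi>\<in>?P. ?f \<pi> = L0}" if "y \<in> ?f ` ?P" for y
  proof -
    obtain \<pi>0 where p0: "\<pi>0 permutes {..<length L0}" and y: "y = ?f \<pi>0" using \<open>y \<in> ?f ` ?P\<close> by auto
    have ip0: "inv \<pi>0 permutes {..<length L0}" using p0 by (rule permutes_inv)
    have "{\<pi>\<in>?P. ?f \<pi> = y} = (\<lambda>\<sigma>. \<sigma> \<circ> \<pi>0) ` {\<pi>\<in>?P. ?f \<pi> = L0}"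
    proof
      show "(\<lambda>\<sigma>. \<sigma> \<circ> \<pi>0) ` {\<pi>\<in>?P. ?f \<pi> = L0} \<subseteq> {\<pi>\<in>?P. ?f \<pi> = y}"
        using p0 y by (auto intro: permutes_compose simp: permute_list_compose)
      show "{\<pi>\<in>?P. ?f \<pi> = y} \<subseteq> (\<lambda>\<sigma>. \<sigma> \<circ> \<pi>0) ` {\<pi>\<in>?P. ?f \<pi> = L0}"
      proof
        fix \<pi> assume "\<pi> \<in> {\<pi>\<in>?P. ?f \<pi> = y}"
        then have pp: "\<pi> permutes {..<length L0}" and py: "?f \<pi> = y" by auto
        let ?\<sigma> = "\<pi> \<circ> inv \<pi>0"
        have s1: "?\<sigma> permutes {..<length L0}" using ip0 pp by (rule permutes_compose)
        have s2: "?\<sigma> \<circ> \<pi>0 = \<pi>" using permutes_inv_o(2)[OF p0] by (simp add: o_assoc[symmetric])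
        have "?f ?\<sigma> = permute_list (inv \<pi>0) (permute_list \<pi> L0)"
          using ip0 by (simp add: permute_list_compose)
        also have "\<dots> = permute_list (inv \<pi>0) (permute_list \<pi>0 L0)" using py y by simp
        also have "\<dots> = permute_list (\<pi>0 \<circ> inv \<pi>0) L0" using ip0 by (simp add: permute_list_compose)
        also have "\<dots> = L0" using permutes_inv_o(1)[OF p0] by simp
        finally show "\<pi> \<in> (\<lambda>\<sigma>. \<sigma> \<circ> \<pi>0) ` {\<pi>\<in>?P. ?f \<pi> = L0}"
          using s1 s2 by (intro image_eqI[of _ _ ?\<sigma>]) auto
      qed
    qed
    then show ?thesis using card_image[OF comp_right_inj[OF p0]] by simp
  qed
  show ?thesis
    by (subst sum_const_fibers[of ?P ?f, OF _ fib]) (simp_all add: finite_permutations img)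
qed


lemma exists_perm:
  assumes e: "0 < e" and w: "w \<in> Wl (e*p) p" and c: "\<forall>m<p. card {x. x < e*p \<and> w!x = m} = e"
  shows "\<exists>\<rho>. \<rho> permutes {..<e*p} \<and> map (\<lambda>x. \<rho> x div e) [0..<e*p] = w"
proof -
  let ?N = "e*p"
  define r where "r x = card {y. y < x \<and> w!y = w!x}" for x
  define \<rho> where "\<rho> x = (if x < ?N then e * (w!x) + r x else x)" for x
  have lw: "length w = ?N" using w by (simp add: Wl_def)
  have wl: "w!x < p" if "x < ?N" for x
  proof -
    have "w!x \<in> set w" using that lw by simp
    then show ?thesis using w by (auto simp: Wl_def)
  qed
  have rl: "r x < e" if x: "x < ?N" for x
  proof -
    have "{y. y < x \<and> w!y = w!x} \<subset> {y. y < ?N \<and> w!y = w!x}" using x by auto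
    then have "r x < card {y. y < ?N \<and> w!y = w!x}" unfolding r_def
      by (rule psubset_card_mono[rotated]) simp
    with c wl[OF x] show ?thesis by simp
  qed
  have rd: "\<rho> x div e = w!x" and rm: "\<rho> x mod e = r x" if "x < ?N" for x
    using that rl[OF that] e by (simp_all add: \<rho>_def)
  have rlt: "\<rho> x < ?N" if x: "x < ?N" for x
  proof -
    have "e * (w!x) + r x < e * Suc (w!x)" using rl[OF x] by simp
    also have "\<dots> \<le> e * p" using wl[OF x] by (intro mult_le_mono2) (simp add: Suc_le_eq)
    finally show ?thesis using x by (simp add: \<rho>_def)
  qed
  have lt: "r x < r x'" if "x < x'" "w!x = w!x'" "x' < ?N" for x x'
  proof -
    have "{y. y < x \<and> w!y = w!x} \<subset> {y. y < x' \<and> w!y = w!x'}" using that by auto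
    then show ?thesis unfolding r_def by (rule psubset_card_mono[rotated]) simp
  qed
  have inj: "inj_on \<rho> {..<?N}"
  proof (rule inj_onI)
    fix x x' assume x: "x \<in> {..<?N}" and x': "x' \<in> {..<?N}" and eq: "\<rho> x = \<rho> x'"
    have w_eq: "w!x = w!x'" using rd[of x] rd[of x'] x x' eq by simp
    have r_eq: "r x = r x'" using rm[of x] rm[of x'] x x' eq by simp
    show "x = x'"
    proof (rule ccontr)
      assume "x \<noteq> x'"
      then have "x < x' \<or> x' < x" by arith
      then show False using lt w_eq r_eq x x' by (metis lessThan_iff less_irrefl)
    qed
  qed
  have "\<rho> ` {..<?N} = {..<?N}"
    by (rule endo_inj_surj) (use rlt inj in auto)
  then have "bij_betw \<rho> {..<?N} {..<?N}" using inj by (simp add: bij_betw_def)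
  then have perm: "\<rho> permutes {..<?N}" by (rule bij_imp_permutes) (simp add: \<rho>_def)
  have "map (\<lambda>x. \<rho> x div e) [0..<?N] = w"
    by (rule nth_equalityI) (simp_all add: lw rd)
  then show ?thesis using perm by blast
qed

lemma stage2:
  fixes G :: "nat list \<Rightarrow> complex"
  assumes e: "0 < e"
    and vanish: "\<And>w. w \<in> Wl (e*p) p \<Longrightarrow> G w \<noteq> 0 \<Longrightarrow> \<forall>m<p. card {x. x < e*p \<and> w!x = m} = e"
  shows "(\<Sum>\<pi>\<in>{\<pi>. \<pi> permutes {..<e*p}}. G (map (\<lambda>x. \<pi> x div e) [0..<e*p])) =
     of_nat (card {\<sigma>\<in>{\<pi>. \<pi> permutes {..<e*p}}. map (\<lambda>x. \<sigma> x div e) [0..<e*p] = map (\<lambda>x. x div e) [0..<e*p]})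
     * (\<Sum>w\<in>Wl (e*p) p. G w)"
proof -
  let ?N = "e*p"
  let ?P = "{\<pi>. \<pi> permutes {..<?N}}"
  let ?f = "\<lambda>\<pi>. map (\<lambda>x. \<pi> x div e) [0..<?N]"
  let ?S = "{\<sigma>\<in>?P. ?f \<sigma> = map (\<lambda>x. x div e) [0..<?N]}"
  have fin: "finite ?P" by (simp add: finite_permutations)
  have img: "?f ` ?P \<subseteq> Wl ?N p"
  proof
    fix w assume "w \<in> ?f ` ?P"
    then obtain \<pi> where p: "\<pi> permutes {..<?N}" and w: "w = ?f \<pi>" by auto
    have "\<pi> x div e < p" if "x < ?N" for x
    proof -
      have "\<pi> x < e * p" using permutes_in_image[OF p] that by simp
      then show ?thesis by (simp add: less_mult_imp_div_less mult.commute)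
    qed
    then show "w \<in> Wl ?N p" using w by (auto simp: Wl_def)
  qed
  have fib: "card {\<pi>\<in>?P. ?f \<pi> = y} = card ?S" if "y \<in> ?f ` ?P" for y
  proof -
    obtain \<pi>0 where p0: "\<pi>0 permutes {..<?N}" and y: "y = ?f \<pi>0" using \<open>y \<in> ?f ` ?P\<close> by auto
    have ip0: "inv \<pi>0 permutes {..<?N}" using p0 by (rule permutes_inv)
    have "{\<pi>\<in>?P. ?f \<pi> = y} = (\<lambda>\<sigma>. \<sigma> \<circ> \<pi>0) ` ?S"
    proof
      show "(\<lambda>\<sigma>. \<sigma> \<circ> \<pi>0) ` ?S \<subseteq> {\<pi>\<in>?P. ?f \<pi> = y}"
      proof
        fix \<tau> assume "\<tau> \<in> (\<lambda>\<sigma>. \<sigma> \<circ> \<pi>0) ` ?S"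
        then obtain \<sigma> where s: "\<sigma> permutes {..<?N}" and sf: "?f \<sigma> = map (\<lambda>x. x div e) [0..<?N]"
          and tau: "\<tau> = \<sigma> \<circ> \<pi>0" by auto
        have sd: "\<sigma> z div e = z div e" if "z < ?N" for z
          using arg_cong[OF sf, of "\<lambda>l. l ! z"] that by simp
        have "?f (\<sigma> \<circ> \<pi>0) = y"
          using y sd permutes_in_image[OF p0] by (auto intro!: nth_equalityI)
        then show "\<tau> \<in> {\<pi>\<in>?P. ?f \<pi> = y}" using permutes_compose[OF p0 s] tau by simp
      qed
      show "{\<pi>\<in>?P. ?f \<pi> = y} \<subseteq> (\<lambda>\<sigma>. \<sigma> \<circ> \<pi>0) ` ?S"
      proof
        fix \<pi> assume "\<pi> \<in> {\<pi>\<in>?P. ?f \<pi> = y}"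
        then have pp: "\<pi> permutes {..<?N}" and py: "?f \<pi> = y" by auto
        have pd: "\<pi> x div e = \<pi>0 x div e" if "x < ?N" for x
          using arg_cong[OF py, of "\<lambda>l. l ! x"] that y by simp
        let ?\<sigma> = "\<pi> \<circ> inv \<pi>0"
        have s1: "?\<sigma> permutes {..<?N}" using ip0 pp by (rule permutes_compose)
        have s2: "?\<sigma> \<circ> \<pi>0 = \<pi>" using permutes_inv_o(2)[OF p0] by (simp add: o_assoc[symmetric])
        have s3: "?f ?\<sigma> = map (\<lambda>x. x div e) [0..<?N]"
        proof (rule nth_equalityI)
          fix z assume "z < length (?f ?\<sigma>)"
          then have z: "z < ?N" by simp
          have "inv \<pi>0 z < ?N" using permutes_in_image[OF ip0] z by simp
          then have "\<pi> (inv \<pi>0 z) div e = \<pi>0 (inv \<pi>0 z) div e" by (rule pd)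
          then show "?f ?\<sigma> ! z = map (\<lambda>x. x div e) [0..<?N] ! z"
            using z permutes_inverses(1)[OF p0] by simp
        qed simp
        show "\<pi> \<in> (\<lambda>\<sigma>. \<sigma> \<circ> \<pi>0) ` ?S"
          using s1 s2 s3 by (intro image_eqI[of _ _ ?\<sigma>]) auto
      qed
    qed
    then show ?thesis using card_image[OF comp_right_inj[OF p0]] by simp
  qed
  have "(\<Sum>\<pi>\<in>?P. G (?f \<pi>)) = of_nat (card ?S) * (\<Sum>w\<in>?f ` ?P. G w)"
    by (rule sum_const_fibers[OF fin fib])
  also have "(\<Sum>w\<in>?f ` ?P. G w) = (\<Sum>w\<in>Wl ?N p. G w)"
  proof (rule sum.mono_neutral_left[OF finite_Wl img])
    show "\<forall>w\<in>Wl ?N p - ?f ` ?P. G w = 0"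
    proof (intro ballI, rule ccontr)
      fix w assume w: "w \<in> Wl ?N p - ?f ` ?P" and G: "G w \<noteq> 0"
      obtain \<rho> where "\<rho> permutes {..<?N}" "map (\<lambda>x. \<rho> x div e) [0..<?N] = w"
        using exists_perm[OF e _ vanish[OF _ G]] w by auto
      then show False using w by auto
    qed
  qed
  finally show ?thesis .
qed


lemma core_zero:
  assumes nil: "jac_nilpotent_pow n d Hc (Suc q)" and i: "i < n" and j: "j < n"
    and ty: "set ty \<subseteq> {..<n}"
  shows "(\<Sum>tys\<in>Wl q n. \<Sum>w\<in>Wl (length ty) (Suc q). \<Prod>m<Suc q.
     (if Suc (length (sub ty w m)) = d
      then Hc (js i tys j m) (Poly_Mapping.single (js i tys j (Suc m)) 1 + msum (sub ty w m)) else 0)) = 0"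
proof -
  let ?J = "jac n d Hc"
  have z: "jac_pow n d Hc (Suc q) i j = 0" using nil i j by (simp add: jac_nilpotent_pow_def)
  have "0 = Poly_Mapping.lookup (pds ty (jac_pow n d Hc (Suc q) i j)) 0" by (simp del: jac_pow.simps add: z)
  also have "\<dots> = (\<Sum>tys\<in>Wl q n. \<Sum>w\<in>Wl (length ty) (Suc q). \<Prod>m<Suc q.
      Poly_Mapping.lookup (pds (sub ty w m) (?J (js i tys j m) (js i tys j (Suc m)))) 0)"
    by (simp del: jac_pow.simps prod.lessThan_Suc add: jac_pow_expand[OF i] pds_sum lookup_sum pds_prod lookup_prod_zero)
  also have "\<dots> = (\<Sum>tys\<in>Wl q n. \<Sum>w\<in>Wl (length ty) (Suc q). \<Prod>m<Suc q.
     (if Suc (length (sub ty w m)) = d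
      then Hc (js i tys j m) (Poly_Mapping.single (js i tys j (Suc m)) 1 + msum (sub ty w m)) else 0))"
  proof (intro sum.cong refl prod.cong)
    fix tys w m assume tys: "tys \<in> Wl q n" and m: "m \<in> {..<Suc q}"
    have st: "set tys \<subseteq> {..<n}" "length tys = q" using tys by (auto simp: Wl_def)
    have "js i tys j (Suc m) < n" using m st by (intro js_lt[OF i j]) auto
    moreover have "set (sub ty w m) \<subseteq> {..<n}" using set_sub ty by blast
    ultimately show "Poly_Mapping.lookup (pds (sub ty w m) (?J (js i tys j m) (js i tys j (Suc m)))) 0 =
     (if Suc (length (sub ty w m)) = d
      then Hc (js i tys j m) (Poly_Mapping.single (js i tys j (Suc m)) 1 + msum (sub ty w m)) else 0)"
      by (simp add: jac_term)
  qed
  finally show ?thesis by simp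
qed

definition slice :: "nat \<Rightarrow> 'a list \<Rightarrow> nat \<Rightarrow> 'a list" where
  "slice e ss m = take e (drop (e*m) ss)"

lemma mset_sub:
  assumes "length w = length L"
  shows "mset (sub L w m) = image_mset (\<lambda>x. L!x) (mset_set {x. x < length L \<and> w!x = m})"
proof -
  have z: "zip L w = map (\<lambda>x. (L!x, w!x)) [0..<length L]"
    using assms by (intro nth_equalityI) simp_all
  have "sub L w m = map (\<lambda>x. L!x) (filter (\<lambda>x. w!x = m) [0..<length L])"
    by (simp add: sub_def z filter_map o_def)
  moreover have "{x \<in> {0..<length L}. w!x = m} = {x. x < length L \<and> w!x = m}" by auto
  ultimately show ?thesis by simp
qed

lemma msum_mset: "msum L = sum_mset (image_mset (\<lambda>j. Poly_Mapping.single j 1) (mset L))"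
  by (induction L) simp_all

lemma mu_msum: "mu ts = msum (map root_type ts)"
  by (simp add: mu_def msum_def o_def)

lemma pointwise:
  assumes e: "0 < e" and len: "length L0 = e*p" and pi: "\<pi> permutes {..<e*p}" and m: "m < p"
  shows "mset (map root_type (slice e (permute_list \<pi> L0) m)) =
         mset (sub (map root_type L0) (map (\<lambda>x. inv \<pi> x div e) [0..<e*p]) m)"
proof -
  let ?N = "e*p"
  let ?tl = "map root_type L0"
  let ?lvl = "{e*m..<e*m+e}"
  have le: "e*m + e \<le> ?N"
  proof -
    have "e*m + e = e * Suc m" by simp
    also have "\<dots> \<le> e*p" using m by (intro mult_le_mono2) simp
    finally show ?thesis .
  qed
  have sl: "slice e (permute_list \<pi> L0) m = map (\<lambda>k. L0!(\<pi> k)) [e*m..<e*m+e]"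
    using le len by (simp add: slice_def permute_list_def drop_map take_map min_def)
  have lvlN: "k < ?N" if "k \<in> ?lvl" for k using that le by auto
  have A: "mset (map root_type (slice e (permute_list \<pi> L0) m)) = image_mset (\<lambda>k. ?tl!(\<pi> k)) (mset_set ?lvl)"
  proof -
    have "mset (map root_type (slice e (permute_list \<pi> L0) m)) = image_mset (\<lambda>k. root_type (L0!(\<pi> k))) (mset_set ?lvl)"
      by (simp add: sl multiset.map_comp o_def)
    also have "\<dots> = image_mset (\<lambda>k. ?tl!(\<pi> k)) (mset_set ?lvl)"
    proof (rule image_mset_cong)
      fix k assume "k \<in># mset_set ?lvl"
      then have "k < ?N" using lvlN by simp
      then have "\<pi> k < length L0" using permutes_in_image[OF pi] len by simp
      then show "root_type (L0!(\<pi> k)) = ?tl!(\<pi> k)" by simp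
    qed
    finally show ?thesis .
  qed
  have S: "{x. x < ?N \<and> map (\<lambda>x. inv \<pi> x div e) [0..<?N] ! x = m} = \<pi> ` ?lvl"
  proof
    show "{x. x < ?N \<and> map (\<lambda>x. inv \<pi> x div e) [0..<?N] ! x = m} \<subseteq> \<pi> ` ?lvl"
    proof
      fix x assume "x \<in> {x. x < ?N \<and> map (\<lambda>x. inv \<pi> x div e) [0..<?N] ! x = m}"
      then have x: "x < ?N" and "map (\<lambda>x. inv \<pi> x div e) [0..<?N] ! x = m" by auto
      then have "inv \<pi> x div e = m" using len by simp
      then have "inv \<pi> x \<in> ?lvl" using div_eq_iff_nat[OF e] by auto
      moreover have "x = \<pi> (inv \<pi> x)" using permutes_inverses(1)[OF pi] by simp
      ultimately show "x \<in> \<pi> ` ?lvl" by blast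
    qed
    show "\<pi> ` ?lvl \<subseteq> {x. x < ?N \<and> map (\<lambda>x. inv \<pi> x div e) [0..<?N] ! x = m}"
    proof
      fix x assume "x \<in> \<pi> ` ?lvl"
      then obtain k where k: "k \<in> ?lvl" and xk: "x = \<pi> k" by auto
      have "\<pi> k < ?N" using permutes_in_image[OF pi] lvlN[OF k] by simp
      moreover have "k div e = m" using k div_eq_iff_nat[OF e] by auto
      ultimately show "x \<in> {x. x < ?N \<and> map (\<lambda>x. inv \<pi> x div e) [0..<?N] ! x = m}"
        using len permutes_inverses(2)[OF pi] xk by simp
    qed
  qed
  have inj: "inj_on \<pi> ?lvl" using permutes_inj[OF pi] by (rule inj_on_subset) simp
  have "mset (sub ?tl (map (\<lambda>x. inv \<pi> x div e) [0..<?N]) m) = image_mset (\<lambda>x. ?tl!x) (mset_set (\<pi> ` ?lvl))"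
    using len by (subst mset_sub) (simp_all add: S)
  also have "\<dots> = image_mset (\<lambda>k. ?tl!(\<pi> k)) (mset_set ?lvl)"
    by (simp add: image_mset_mset_set[OF inj, symmetric] multiset.map_comp o_def)
  finally show ?thesis using A by simp
qed


lemma length_slice:
  assumes "length ss = e * p" "m < p"
  shows "length (slice e ss m) = e"
proof -
  have "e*m + e \<le> e*p" using assms(2) by (metis mult_Suc_right mult_le_mono2 Suc_leI add.commute)
  then show ?thesis using assms(1) by (simp add: slice_def)
qed

lemma shuffle_core:
  fixes L0 :: "ttree list"
  assumes nil: "jac_nilpotent_pow n (Suc e) Hc (Suc q)" and e: "0 < e" and i: "i < n" and j: "j < n"
    and len: "length L0 = e * Suc q" and rt: "\<forall>t\<in>set L0. root_type t < n"
  shows "(\<Sum>tys\<in>Wl q n. \<Sum>ss\<in>{ss. mset ss = mset L0}. \<Prod>m<Suc q.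
      Hc (js i tys j m) (Poly_Mapping.single (js i tys j (Suc m)) 1 + mu (slice e ss m))) = 0"
proof -
  let ?p = "Suc q"
  let ?N = "e * Suc q"
  let ?P = "{\<pi>. \<pi> permutes {..<?N}}"
  let ?ty = "map root_type L0"
  define F where "F tys ss = (\<Prod>m<?p. Hc (js i tys j m) (Poly_Mapping.single (js i tys j (Suc m)) 1 + mu (slice e ss m)))" for tys ss
  define G where "G tys w = (\<Prod>m<?p. (if Suc (length (sub ?ty w m)) = Suc e
      then Hc (js i tys j m) (Poly_Mapping.single (js i tys j (Suc m)) 1 + msum (sub ?ty w m)) else 0))" for tys w
  define wv where "wv \<pi> = map (\<lambda>x. \<pi> x div e) [0..<?N]" for \<pi> :: "nat \<Rightarrow> nat"
  define K1 where "K1 = card {\<pi>\<in>{\<pi>. \<pi> permutes {..<length L0}}. permute_list \<pi> L0 = L0}"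
  define K2 where "K2 = card {\<sigma>\<in>?P. map (\<lambda>x. \<sigma> x div e) [0..<?N] = map (\<lambda>x. x div e) [0..<?N]}"
  have K1: "K1 \<noteq> 0"
  proof -
    have "id \<in> {\<pi>\<in>{\<pi>. \<pi> permutes {..<length L0}}. permute_list \<pi> L0 = L0}" by simp
    moreover have "finite {\<pi>\<in>{\<pi>. \<pi> permutes {..<length L0}}. permute_list \<pi> L0 = L0}"
      using finite_permutations[of "{..<length L0}"] by simp
    ultimately show ?thesis unfolding K1_def by (auto simp: card_eq_0_iff intro!: exI[of _ id])
  qed
  have lensub: "length (sub ?ty w m) = card {x. x < ?N \<and> w!x = m}" if "length w = ?N" for w m
  proof -
    have "length (sub ?ty w m) = size (mset (sub ?ty w m))" by simp
    also have "\<dots> = card {x. x < ?N \<and> w!x = m}" using that len by (subst mset_sub) simp_all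
    finally show ?thesis .
  qed
  have step: "of_nat K1 * (\<Sum>ss\<in>{ss. mset ss = mset L0}. F tys ss) = of_nat K2 * (\<Sum>w\<in>Wl ?N ?p. G tys w)" for tys
  proof -
    have "of_nat K1 * (\<Sum>ss\<in>{ss. mset ss = mset L0}. F tys ss) = (\<Sum>\<pi>\<in>{\<pi>. \<pi> permutes {..<length L0}}. F tys (permute_list \<pi> L0))"
      unfolding K1_def by (rule stage1[symmetric])
    also have "\<dots> = (\<Sum>\<pi>\<in>?P. G tys (wv (inv \<pi>)))"
      unfolding len
    proof (rule sum.cong[OF refl])
      fix \<pi> assume "\<pi> \<in> ?P"
      then have pi: "\<pi> permutes {..<?N}" by simp
      show "F tys (permute_list \<pi> L0) = G tys (wv (inv \<pi>))"
        unfolding F_def G_def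
      proof (rule prod.cong[OF refl])
        fix m assume "m \<in> {..<?p}"
        then have m: "m < ?p" by simp
        have M: "mset (map root_type (slice e (permute_list \<pi> L0) m)) = mset (sub ?ty (wv (inv \<pi>)) m)"
          unfolding wv_def by (rule pointwise[OF e len pi m])
        have l1: "length (slice e (permute_list \<pi> L0) m) = e"
          by (rule length_slice[OF _ m]) (simp add: len)
        have l2: "length (sub ?ty (wv (inv \<pi>)) m) = e"
          using arg_cong[OF M, of size] l1 by simp
        have mu: "mu (slice e (permute_list \<pi> L0) m) = msum (sub ?ty (wv (inv \<pi>)) m)"
          unfolding mu_msum msum_mset[of "map root_type _"] msum_mset[of "sub _ _ _"] M ..
        show "Hc (js i tys j m) (Poly_Mapping.single (js i tys j (Suc m)) 1 + mu (slice e (permute_list \<pi> L0) m)) =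
          (if Suc (length (sub ?ty (wv (inv \<pi>)) m)) = Suc e
           then Hc (js i tys j m) (Poly_Mapping.single (js i tys j (Suc m)) 1 + msum (sub ?ty (wv (inv \<pi>)) m)) else 0)"
          using l2 mu by simp
      qed
    qed
    also have "\<dots> = (\<Sum>\<pi>\<in>?P. G tys (wv \<pi>))"
    proof -
      have "bij_betw inv ?P ?P"
      proof (rule bij_betwI[of _ _ _ inv])
        show "inv \<in> ?P \<rightarrow> ?P" by (auto intro: permutes_inv)
        show "inv \<in> ?P \<rightarrow> ?P" by (auto intro: permutes_inv)
        show "inv (inv x) = x" if "x \<in> ?P" for x using that by (simp add: permutes_inv_inv)
        show "inv (inv y) = y" if "y \<in> ?P" for y using that by (simp add: permutes_inv_inv)
      qed
      then show ?thesis by (rule sum.reindex_bij_betw)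
    qed
    also have "\<dots> = of_nat K2 * (\<Sum>w\<in>Wl ?N ?p. G tys w)"
      unfolding wv_def K2_def
    proof (rule stage2[OF e])
      fix w assume w: "w \<in> Wl ?N ?p" and G: "G tys w \<noteq> 0"
      show "\<forall>m<?p. card {x. x < ?N \<and> w!x = m} = e"
      proof (intro allI impI)
        fix m assume m: "m < ?p"
        have "Suc (length (sub ?ty w m)) = Suc e"
        proof (rule ccontr)
          assume "Suc (length (sub ?ty w m)) \<noteq> Suc e"
          then have "G tys w = 0" unfolding G_def using m
            by (intro prod_zero) (auto intro!: bexI[of _ m])
          then show False using G by simp
        qed
        then show "card {x. x < ?N \<and> w!x = m} = e" using lensub w by (simp add: Wl_def)
      qed
    qed
    finally show ?thesis .
  qed
  have "of_nat K1 * (\<Sum>tys\<in>Wl q n. \<Sum>ss\<in>{ss. mset ss = mset L0}. F tys ss)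
      = of_nat K2 * (\<Sum>tys\<in>Wl q n. \<Sum>w\<in>Wl ?N ?p. G tys w)"
  proof -
    have "of_nat K1 * (\<Sum>tys\<in>Wl q n. \<Sum>ss\<in>{ss. mset ss = mset L0}. F tys ss)
       = (\<Sum>tys\<in>Wl q n. of_nat K1 * (\<Sum>ss\<in>{ss. mset ss = mset L0}. F tys ss))"
      by (rule sum_distrib_left)
    also have "\<dots> = (\<Sum>tys\<in>Wl q n. of_nat K2 * (\<Sum>w\<in>Wl ?N ?p. G tys w))"
      by (simp only: step)
    also have "\<dots> = of_nat K2 * (\<Sum>tys\<in>Wl q n. \<Sum>w\<in>Wl ?N ?p. G tys w)"
      by (rule sum_distrib_left[symmetric])
    finally show ?thesis .
  qed
  also have "(\<Sum>tys\<in>Wl q n. \<Sum>w\<in>Wl ?N ?p. G tys w) = 0"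
    unfolding G_def using core_zero[OF nil i j, of ?ty] rt len by auto
  finally show ?thesis using K1 unfolding F_def by simp
qed




lemma subtree_at_append: "subtree_at T (a @ b) = subtree_at (subtree_at T a) b"
proof (induction a arbitrary: T)
  case (Cons c a) then show ?case by (cases T) simp
qed simp

lemma valid_addr_append: "valid_addr T (a @ b) \<longleftrightarrow> valid_addr T a \<and> valid_addr (subtree_at T a) b"
proof (induction a arbitrary: T)
  case (Cons c a) then show ?case by (cases T) auto
qed simp

lemma d_catalan_subtree: "valid_addr T a \<Longrightarrow> d_catalan d T \<Longrightarrow> d_catalan d (subtree_at T a)"
proof (induction a arbitrary: T)
  case (Cons c a) then show ?case by (cases T) auto
qed simp

lemma n_type_subtree: "valid_addr T a \<Longrightarrow> n_type n T \<Longrightarrow> n_type n (subtree_at T a)"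
proof (induction a arbitrary: T)
  case (Cons c a) then show ?case by (cases T) auto
qed simp

lemma n_type_root: "n_type n T \<Longrightarrow> root_type T < n"
  by (cases T) simp

lemma root_replace: "root_type s = root_type (subtree_at t a) \<Longrightarrow> root_type (replace_at t a s) = root_type t"
  by (cases a; cases t) auto

lemma subtree_replace: "valid_addr T a \<Longrightarrow> subtree_at (replace_at T a s) a = s"
proof (induction a arbitrary: T)
  case (Cons c a) then show ?case by (cases T) auto
qed simp

lemma mu_append: "mu (xs @ ys) = mu xs + mu ys"
  by (simp add: mu_def)

lemma mu_Cons: "mu (t # ts) = Poly_Mapping.single (root_type t) 1 + mu ts"
  by (simp add: mu_def)

lemma mu_single: "mu [t] = Poly_Mapping.single (root_type t) 1"
  by (simp add: mu_def)

lemma EH_replace: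
  "valid_addr T a \<Longrightarrow> \<exists>C. \<forall>s. root_type s = root_type (subtree_at T a) \<longrightarrow> EH Hc (replace_at T a s) = C * EH Hc s"
proof (induction a arbitrary: T)
  case Nil then show ?case by (intro exI[of _ 1]) simp
next
  case (Cons c a)
  obtain i ts where T: "T = Nd i ts" by (cases T)
  have c: "c < length ts" and v: "valid_addr (ts ! c) a" using Cons.prems T by auto
  obtain C' where C': "\<forall>s. root_type s = root_type (subtree_at (ts ! c) a) \<longrightarrow> EH Hc (replace_at (ts ! c) a s) = C' * EH Hc s"
    using Cons.IH[OF v] by blast
  let ?P1 = "prod_list (map (EH Hc) (take c ts))"
  let ?P2 = "prod_list (map (EH Hc) (drop (Suc c) ts))"
  show ?case
  proof (intro exI[of _ "Hc i (mu ts) * ?P1 * ?P2 * C'"] allI impI)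
    fix s assume rs: "root_type s = root_type (subtree_at T (c # a))"
    let ?X = "replace_at (ts ! c) a s"
    have rs': "root_type s = root_type (subtree_at (ts ! c) a)" using rs T by simp
    have rX: "root_type ?X = root_type (ts ! c)" using root_replace[OF rs'] .
    have ne: "ts \<noteq> []" "ts[c := ?X] \<noteq> []" using c by auto
    have "map root_type (ts[c := ?X]) = (map root_type ts)[c := root_type ?X]" by (simp add: map_update)
    also have "\<dots> = map root_type ts" using rX c by (metis list_update_id nth_map)
    finally have mu: "mu (ts[c := ?X]) = mu ts" by (simp add: mu_msum)
    have pl: "prod_list (map (EH Hc) (ts[c := ?X])) = ?P1 * EH Hc ?X * ?P2"
      using c by (simp add: upd_conv_take_nth_drop mult_ac)
    have "EH Hc (replace_at T (c # a) s) = Hc i (mu ts) * (?P1 * EH Hc ?X * ?P2)"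
      using T ne mu pl by simp
    also have "\<dots> = Hc i (mu ts) * ?P1 * ?P2 * C' * EH Hc s"
      using C' rs' by (simp add: mult_ac)
    finally show "EH Hc (replace_at T (c # a) s) = Hc i (mu ts) * ?P1 * ?P2 * C' * EH Hc s" .
  qed
qed

lemma path_len:
  "d_catalan d T0 \<Longrightarrow> valid_addr T0 cs \<Longrightarrow> length (path_sibs T0 cs) = (d - 1) * length cs"
proof (induction cs arbitrary: T0)
  case Nil then show ?case by simp
next
  case (Cons c cs)
  obtain i ts where T: "T0 = Nd i ts" by (cases T0)
  have c: "c < length ts" and v: "valid_addr (ts ! c) cs" using Cons.prems T by auto
  have lts: "length ts = d" using Cons.prems(1) T c by auto
  have dc: "d_catalan d (ts ! c)" using Cons.prems(1) T c by auto
  have IH: "length (path_sibs (ts ! c) cs) = (d - 1) * length cs" using Cons.IH[OF dc v] .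
  have "length (path_sibs T0 (c # cs)) = c + (d - Suc c) + (d - 1) * length cs"
    using T c lts IH by simp
  also have "\<dots> = (d - 1) * length (c # cs)" using c lts by simp
  finally show ?case .
qed

lemma path_lt:
  "d_catalan d T0 \<Longrightarrow> valid_addr T0 cs \<Longrightarrow> c \<in> set cs \<Longrightarrow> c < d"
proof (induction cs arbitrary: T0)
  case Nil then show ?case by simp
next
  case (Cons c' cs)
  obtain i ts where T: "T0 = Nd i ts" by (cases T0)
  have c: "c' < length ts" and v: "valid_addr (ts ! c') cs" using Cons.prems T by auto
  have lts: "length ts = d" using Cons.prems(1) T c by auto
  have dc: "d_catalan d (ts ! c')" using Cons.prems(1) T c by auto
  show ?case
  proof (cases "c = c'")
    case True then show ?thesis using c lts by simp
  next
    case False then have "c \<in> set cs" using Cons.prems(3) by simp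
    then show ?thesis using Cons.IH[OF dc v] by blast
  qed
qed

lemma path_ntype:
  "valid_addr T0 cs \<Longrightarrow> n_type n T0 \<Longrightarrow> t \<in> set (path_sibs T0 cs) \<Longrightarrow> n_type n t"
proof (induction cs arbitrary: T0)
  case Nil then show ?case by simp
next
  case (Cons c cs)
  obtain i ts where T: "T0 = Nd i ts" by (cases T0)
  have c: "c < length ts" and v: "valid_addr (ts ! c) cs" using Cons.prems T by auto
  have a: "\<forall>t\<in>set ts. n_type n t" using Cons.prems(2) T by simp
  have nc: "n_type n (ts ! c)" using a c by simp
  have "t \<in> set (take c ts) \<or> t \<in> set (drop (Suc c) ts) \<or> t \<in> set (path_sibs (ts ! c) cs)"
    using Cons.prems(3) T by simp
  then show ?case
  proof (elim disjE)
    assume "t \<in> set (take c ts)" then show ?thesis using a by (auto dest: in_set_takeD)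
  next
    assume "t \<in> set (drop (Suc c) ts)" then show ?thesis using a by (auto dest: in_set_dropD)
  next
    assume "t \<in> set (path_sibs (ts ! c) cs)" then show ?thesis using Cons.IH[OF v nc] by blast
  qed
qed


lemma rebuild_root: "length tys = length cs \<Longrightarrow> root_type (rebuild d tys cs ss b) = (tys @ [root_type b]) ! 0"
  by (cases tys; cases cs) auto

lemma rebuild_EH:
  assumes "length tys = length cs" "length ss = (d - 1) * length cs" "\<forall>c\<in>set cs. c < d"
  shows "EH Hc (rebuild d tys cs ss b) =
    (\<Prod>m<length cs. Hc ((tys @ [root_type b]) ! m)
        (Poly_Mapping.single ((tys @ [root_type b]) ! Suc m) 1 + mu (slice (d - 1) ss m)))
    * prod_list (map (EH Hc) ss) * EH Hc b"
  using assms
proof (induction cs arbitrary: tys ss)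
  case Nil then show ?case by simp
next
  case (Cons c cs)
  let ?e = "d - 1"
  let ?rb = "root_type b"
  obtain t tys' where tys: "tys = t # tys'" using Cons.prems(1) by (cases tys) auto
  have ltys: "length tys' = length cs" using Cons.prems(1) tys by simp
  have ce: "c \<le> ?e" using Cons.prems(3) by auto
  have lss: "length ss = ?e + ?e * length cs" using Cons.prems(2) by simp
  define R where "R = rebuild d tys' cs (drop ?e ss) b"
  have reb: "rebuild d tys (c # cs) ss b = Nd t (take c ss @ [R] @ take (?e - c) (drop c ss))"
    by (simp add: tys R_def)
  have tk: "take c ss @ take (?e - c) (drop c ss) = take ?e ss"
    using ce by (metis take_add le_add_diff_inverse)
  have mu_ch: "mu (take c ss @ [R] @ take (?e - c) (drop c ss)) = Poly_Mapping.single (root_type R) 1 + mu (take ?e ss)"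
  proof -
    have "mu (take ?e ss) = mu (take c ss) + mu (take (?e - c) (drop c ss))"
      by (simp only: tk[symmetric] mu_append)
    then show ?thesis by (simp add: mu_append mu_Cons add_ac)
  qed
  have pl_ch: "prod_list (map (EH Hc) (take c ss @ [R] @ take (?e - c) (drop c ss))) = EH Hc R * prod_list (map (EH Hc) (take ?e ss))"
  proof -
    have "prod_list (map (EH Hc) (take ?e ss)) = prod_list (map (EH Hc) (take c ss)) * prod_list (map (EH Hc) (take (?e - c) (drop c ss)))"
      by (simp only: tk[symmetric] map_append prod_list.append)
    then show ?thesis by (simp add: mult_ac)
  qed
  have rR: "root_type R = (tys @ [?rb]) ! Suc 0"
    using rebuild_root[OF ltys] tys by (simp add: R_def)
  have IH: "EH Hc R = (\<Prod>m<length cs. Hc ((tys' @ [?rb]) ! m)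
        (Poly_Mapping.single ((tys' @ [?rb]) ! Suc m) 1 + mu (slice ?e (drop ?e ss) m)))
    * prod_list (map (EH Hc) (drop ?e ss)) * EH Hc b"
    unfolding R_def using Cons.IH[OF ltys] Cons.prems(2,3) by simp
  have sl: "slice ?e (drop ?e ss) m = slice ?e ss (Suc m)" for m
    by (simp add: slice_def add.commute)
  have sl0: "slice ?e ss 0 = take ?e ss" by (simp add: slice_def)
  have pss: "prod_list (map (EH Hc) ss) = prod_list (map (EH Hc) (take ?e ss)) * prod_list (map (EH Hc) (drop ?e ss))"
    by (metis append_take_drop_id map_append prod_list.append)
  have "EH Hc (rebuild d tys (c # cs) ss b) =
      Hc t (Poly_Mapping.single (root_type R) 1 + mu (take ?e ss)) * (EH Hc R * prod_list (map (EH Hc) (take ?e ss)))"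
    unfolding reb by (simp only: EH.simps mu_ch pl_ch) simp
  also have "\<dots> = Hc ((tys @ [?rb]) ! 0) (Poly_Mapping.single ((tys @ [?rb]) ! Suc 0) 1 + mu (slice ?e ss 0))
      * (\<Prod>m<length cs. Hc ((tys @ [?rb]) ! Suc m)
        (Poly_Mapping.single ((tys @ [?rb]) ! Suc (Suc m)) 1 + mu (slice ?e ss (Suc m))))
      * prod_list (map (EH Hc) ss) * EH Hc b"
    unfolding IH rR sl0 pss sl using tys by (simp add: mult_ac)
  also have "\<dots> = (\<Prod>m<length (c # cs). Hc ((tys @ [?rb]) ! m)
        (Poly_Mapping.single ((tys @ [?rb]) ! Suc m) 1 + mu (slice ?e ss m)))
    * prod_list (map (EH Hc) ss) * EH Hc b"
    by (simp only: length_Cons prod.lessThan_Suc_shift)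
  finally show ?case .
qed

lemma rebuild_paths:
  assumes "length tys = length cs" "length ss = (d - 1) * length cs" "\<forall>c\<in>set cs. c < d"
  shows "path_types (rebuild d tys cs ss b) cs = tys \<and> path_sibs (rebuild d tys cs ss b) cs = ss"
  using assms
proof (induction cs arbitrary: tys ss)
  case Nil then show ?case by simp
next
  case (Cons c cs)
  let ?e = "d - 1"
  obtain t tys' where tys: "tys = t # tys'" using Cons.prems(1) by (cases tys) auto
  have ltys: "length tys' = length cs" using Cons.prems(1) tys by simp
  have ce: "c \<le> ?e" using Cons.prems(3) by auto
  have lss: "length ss = ?e + ?e * length cs" using Cons.prems(2) by simp
  define R where "R = rebuild d tys' cs (drop ?e ss) b"
  define ch where "ch = take c ss @ [R] @ take (?e - c) (drop c ss)"
  have reb: "rebuild d tys (c # cs) ss b = Nd t ch"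
    by (simp add: tys R_def ch_def)
  have lc: "length (take c ss) = c" using ce lss by simp
  have chc: "ch ! c = R" unfolding ch_def using lc by (simp add: nth_append)
  have tkc: "take c ch = take c ss" unfolding ch_def using lc by simp
  have drc: "drop (Suc c) ch = take (?e - c) (drop c ss)" unfolding ch_def using lc by simp
  have tk: "take c ss @ take (?e - c) (drop c ss) = take ?e ss"
    using ce by (metis take_add le_add_diff_inverse)
  have IH: "path_types R cs = tys' \<and> path_sibs R cs = drop ?e ss"
    unfolding R_def using Cons.IH[OF ltys] Cons.prems(2,3) by simp
  have "path_sibs (Nd t ch) (c # cs) = (take c ch @ drop (Suc c) ch) @ path_sibs (ch ! c) cs" by simp
  also have "\<dots> = (take c ss @ take (?e - c) (drop c ss)) @ drop ?e ss" by (simp only: tkc drc chc IH)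
  also have "\<dots> = ss" by (simp only: tk append_take_drop_id)
  finally show ?case unfolding reb using IH tys chc by simp
qed


lemma prod_list_mset_eq:
  "mset xs = mset ys \<Longrightarrow> prod_list (map f xs) = prod_list (map (f :: _ \<Rightarrow> complex) ys)"
  by (metis mset_map prod_mset_prod_list)

theorem lemma3p6:
  fixes d n p k :: nat
    and Hc :: "nat \<Rightarrow> (nat \<Rightarrow>\<^sub>0 nat) \<Rightarrow> complex"
    and T :: ttree and a cs :: "nat list"
  assumes "d \<ge> 2" and "n \<ge> 1"
    and "1 \<le> p" and "p \<le> n"
    and "jac_nilpotent_pow n d Hc p"
    and "d_catalan d T" and "n_type n T" and "internal_count T = k"
    and "length cs = p" and "valid_addr T (a @ cs)"
  shows "(\<Sum>T'\<in>shuffle_class n d T a cs. EH Hc T') = 0"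
proof -
  obtain q where p: "p = Suc q" using assms(3) by (cases p) auto
  obtain e where d: "d = Suc e" and e: "0 < e" using assms(1) by (cases d) auto
  have va: "valid_addr T a" and vc: "valid_addr (subtree_at T a) cs"
    using assms(10) by (simp_all add: valid_addr_append)
  define T0 where "T0 = subtree_at T a"
  define b where "b = subtree_at T (a @ cs)"
  have b0: "b = subtree_at T0 cs" by (simp add: b_def T0_def subtree_at_append)
  have vc0: "valid_addr T0 cs" using vc by (simp add: T0_def)
  have dT0: "d_catalan d T0" using d_catalan_subtree[OF va assms(6)] by (simp add: T0_def)
  have nT0: "n_type n T0" using n_type_subtree[OF va assms(7)] by (simp add: T0_def)
  define L0 where "L0 = path_sibs T0 cs"
  have lenL0: "length L0 = e * Suc q" using path_len[OF dT0 vc0] assms(9) p d by (simp add: L0_def)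
  have cslt: "\<forall>c\<in>set cs. c < d" using path_lt[OF dT0 vc0] by blast
  have rtL0: "\<forall>t\<in>set L0. root_type t < n"
    using path_ntype[OF vc0 nT0] n_type_root by (auto simp: L0_def)
  have rb: "root_type b < n" using n_type_root[OF n_type_subtree[OF vc0 nT0]] b0 by simp
  define i0 where "i0 = root_type T0"
  have i0n: "i0 < n" using n_type_root[OF nT0] by (simp add: i0_def)
  have hd: "hd (path_types T0 cs) = i0"
  proof -
    obtain c cs' where "cs = c # cs'" using assms(9) p by (cases cs) auto
    then show ?thesis unfolding i0_def by (cases T0) simp
  qed
  define D where "D = Wl q n \<times> {ss. mset ss = mset L0}"
  define f where "f = (\<lambda>(tys, ss). replace_at T a (rebuild d (i0 # tys) cs ss b))"
  have SC: "shuffle_class n d T a cs = f ` D"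
    unfolding shuffle_class_def f_def D_def
    unfolding T0_def[symmetric] b_def[symmetric] hd L0_def[symmetric]
    using assms(9) p by (auto simp: Wl_def)
  have lens: "length (i0 # tys) = length cs" "length ss = (d - 1) * length cs"
    if "(tys, ss) \<in> D" for tys ss
  proof -
    show "length (i0 # tys) = length cs" using that assms(9) p by (simp add: D_def Wl_def)
    have "length ss = length L0" using that unfolding D_def by (auto dest: mset_eq_length)
    then show "length ss = (d - 1) * length cs" using lenL0 assms(9) p d by simp
  qed
  have inj: "inj_on f D"
  proof (rule inj_onI, clarify)
    fix tys ss tys' ss' assume x: "(tys, ss) \<in> D" and y: "(tys', ss') \<in> D" and eq: "f (tys, ss) = f (tys', ss')"
    have f1: "f (tys, ss) = replace_at T a (rebuild d (i0 # tys) cs ss b)"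
      and f2: "f (tys', ss') = replace_at T a (rebuild d (i0 # tys') cs ss' b)" by (simp_all add: f_def)
    have R: "rebuild d (i0 # tys) cs ss b = rebuild d (i0 # tys') cs ss' b"
      using arg_cong[OF eq, of "\<lambda>t. subtree_at t a"] unfolding f1 f2 subtree_replace[OF va] .
    have P1: "path_types (rebuild d (i0 # tys) cs ss b) cs = i0 # tys"
      "path_sibs (rebuild d (i0 # tys) cs ss b) cs = ss"
      using rebuild_paths[OF lens(1,2)[OF x] cslt, of b] by blast+
    have P2: "path_types (rebuild d (i0 # tys') cs ss' b) cs = i0 # tys'"
      "path_sibs (rebuild d (i0 # tys') cs ss' b) cs = ss'"
      using rebuild_paths[OF lens(1,2)[OF y] cslt, of b] by blast+
    have "i0 # tys = i0 # tys'" using P1(1) P2(1) R by metis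
    moreover have "ss = ss'" using P1(2) P2(2) R by metis
    ultimately show "tys = tys' \<and> ss = ss'" by simp
  qed
  obtain C where C: "\<forall>s. root_type s = root_type (subtree_at T a) \<longrightarrow> EH Hc (replace_at T a s) = C * EH Hc s"
    using EH_replace[OF va] by blast
  define PL where "PL = prod_list (map (EH Hc) L0)"
  define Pr where "Pr tys ss = (\<Prod>m<Suc q. Hc (js i0 tys (root_type b) m)
      (Poly_Mapping.single (js i0 tys (root_type b) (Suc m)) 1 + mu (slice e ss m)))" for tys ss
  have tm: "EH Hc (f (tys, ss)) = C * PL * EH Hc b * Pr tys ss" if x: "(tys, ss) \<in> D" for tys ss
  proof -
    have r: "root_type (rebuild d (i0 # tys) cs ss b) = root_type (subtree_at T a)"
      using rebuild_root[OF lens(1)[OF x]] by (simp add: i0_def T0_def)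
    have pl: "prod_list (map (EH Hc) ss) = PL"
      using x unfolding PL_def D_def by (auto intro: prod_list_mset_eq)
    have js: "((i0 # tys) @ [root_type b]) ! m = js i0 tys (root_type b) m" for m
      by (simp add: js_def)
    have "EH Hc (rebuild d (i0 # tys) cs ss b) = Pr tys ss * PL * EH Hc b"
      unfolding rebuild_EH[OF lens(1,2)[OF x] cslt] pl js Pr_def
      using assms(9) p d by simp
    then show ?thesis using C r by (simp add: f_def mult_ac)
  qed
  have "(\<Sum>T'\<in>shuffle_class n d T a cs. EH Hc T') = (\<Sum>x\<in>D. EH Hc (f x))"
    unfolding SC by (rule sum.reindex[OF inj, unfolded o_def])
  also have "\<dots> = (\<Sum>(tys, ss)\<in>D. C * PL * EH Hc b * Pr tys ss)"
    by (intro sum.cong refl) (auto simp: tm)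
  also have "\<dots> = C * PL * EH Hc b * (\<Sum>tys\<in>Wl q n. \<Sum>ss\<in>{ss. mset ss = mset L0}. Pr tys ss)"
    unfolding D_def by (simp add: sum.cartesian_product[symmetric] sum_distrib_left)
  also have "(\<Sum>tys\<in>Wl q n. \<Sum>ss\<in>{ss. mset ss = mset L0}. Pr tys ss) = 0"
    unfolding Pr_def
    by (rule shuffle_core[OF _ e i0n rb lenL0 rtL0]) (use assms(5) d p in simp)
  finally show ?thesis by simp
qed

end
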